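(* Let $n\ge1$, $\vec m=(m_1,\dots,m_n)\in\mathbb{N}^n$ and $1\le j\le n$. For every $w\in\mathbb{Q}_{\ge0}$, $$N_{\Delta(G^j_{n,\vec m})}(w)=2\,N_{\Delta(G^{j-1}_{n,\vec m})}(w)-N_{\Delta(G^{j-1}_{n-1,(m_1,\dots,\widehat{m_j},\dots,m_n)})}(w),$$ where the last polytope lives in $\mathbb{R}^{n-1}$ (coordinates $x_1,\dots,\widehat{x_j},\dots,x_n$), and for $n=1$ it is the zero-dimensional polytope $\{0\}\subset\mathbb{R}^0$, for which $N(w)=1$ if $w=0$ and $N(w)=0$ otherwise.
   Context: For $\vec m\in\mathbb N^n$ and $0\le j\le n$, $G^j_{n,\vec m}=x_1^{m_1}+\dots+x_n^{m_n}+x_1^{-m_1}+\dots+x_j^{-m_j}$, and $\Delta(G^j_{n,\vec m})$ is its Newton polytope, the convex hull of $\vec 0$, $m_ie_i$ ($1\le i\le n$) and $-m_ie_i$ ($1\le i\le j$). For a polytope $\Delta\subset\mathbb{R}^n$ containing $\vec0$, the weight $w_\Delta(u)$ of $u\in\mathbb{Q}^n$ is the smallest $c\in\mathbb{Q}_{\ge0}$ with $u\in c\Delta$ ($\infty$ if none), and $N_\Delta(w)=\#\{u\in\mathbb{Z}^n: w_\Delta(u)=w\}$. *)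

theory Defs
  imports Complex_Main
begin

text \<open>Points of R^n are represented as functions nat => real whose coordinates
  are indexed 1..n (coordinates outside 1..n are irrelevant / zero for lattice points).\<close>

definition conv_hull :: "(nat \<Rightarrow> real) set \<Rightarrow> (nat \<Rightarrow> real) set" where
  "conv_hull V = {x. \<exists>F a. F \<subseteq> V \<and> finite F \<and> F \<noteq> {} \<and> (\<forall>v\<in>F. a v \<ge> 0) \<and>
       sum a F = 1 \<and> x = (\<lambda>k. \<Sum>v\<in>F. a v * v k)}"

definition unitv :: "nat \<Rightarrow> nat \<Rightarrow> real" where
  "unitv i = (\<lambda>k. if k = i then 1 else 0)"

definition scaleset :: "real \<Rightarrow> (nat \<Rightarrow> real) set \<Rightarrow> (nat \<Rightarrow> real) set" where
  "scaleset c S = (\<lambda>x. (\<lambda>k. c * x k)) ` S"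

definition newtonG :: "nat \<Rightarrow> (nat \<Rightarrow> nat) \<Rightarrow> nat \<Rightarrow> (nat \<Rightarrow> real) set" where
  "newtonG n m j = conv_hull ({\<lambda>k. 0} \<union> {(\<lambda>k. real (m i) * unitv i k) | i. 1 \<le> i \<and> i \<le> n}
                                     \<union> {(\<lambda>k. - real (m i) * unitv i k) | i. 1 \<le> i \<and> i \<le> j})"

definition has_weight :: "(nat \<Rightarrow> real) set \<Rightarrow> (nat \<Rightarrow> real) \<Rightarrow> rat \<Rightarrow> bool" where
  "has_weight D u w \<longleftrightarrow> w \<ge> 0 \<and> u \<in> scaleset (of_rat w) D \<and>
     (\<forall>c::rat. c \<ge> 0 \<and> u \<in> scaleset (of_rat c) D \<longrightarrow> w \<le> c)"

definition lattice :: "nat \<Rightarrow> (nat \<Rightarrow> int) set" where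
  "lattice n = {u. \<forall>k. (k < 1 \<or> k > n) \<longrightarrow> u k = 0}"

definition Ncount :: "nat \<Rightarrow> (nat \<Rightarrow> real) set \<Rightarrow> rat \<Rightarrow> nat" where
  "Ncount n D w = card {u \<in> lattice n. has_weight D (\<lambda>k. real_of_int (u k)) w}"

end

theory Submission
  imports Defs "HOL-Library.FuncSet"
begin

definition VV :: "nat \<Rightarrow> (nat \<Rightarrow> nat) \<Rightarrow> nat \<Rightarrow> (nat \<Rightarrow> real) set" where
 "VV n m j = ({\<lambda>k. 0} \<union> {(\<lambda>k. real (m i) * unitv i k) | i. 1 \<le> i \<and> i \<le> n}
                                     \<union> {(\<lambda>k. - real (m i) * unitv i k) | i. 1 \<le> i \<and> i \<le> j})"

lemma delta_sum:
  assumes "i0 \<in> {1..n}" "m i0 \<ge> (1::nat)"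
  shows "(\<Sum>i=1..n. \<bar>c * real (m i0) * unitv i0 i\<bar> / real (m i)) = \<bar>c\<bar>"
proof -
  have "(\<Sum>i=1..n. \<bar>c * real (m i0) * unitv i0 i\<bar> / real (m i)) = (\<Sum>i=1..n. if i = i0 then \<bar>c\<bar> else 0)"
    by (rule sum.cong) (use assms in \<open>auto simp: unitv_def abs_mult\<close>)
  also have "\<dots> = \<bar>c\<bar>" using assms by simp
  finally show ?thesis .
qed

lemma vert:
  assumes m: "\<forall>i. 1 \<le> i \<and> i \<le> n \<longrightarrow> m i \<ge> 1" and v: "v \<in> VV n m j"
  shows "(\<forall>i. j < i \<and> i \<le> n \<longrightarrow> v i \<ge> 0) \<and> (\<Sum>i=1..n. \<bar>v i\<bar> / real (m i)) \<le> 1"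
  using v unfolding VV_def
proof (elim UnE)
  assume "v \<in> {\<lambda>k. 0}" then show ?thesis by auto
next
  assume "v \<in> {(\<lambda>k. real (m i) * unitv i k) | i. 1 \<le> i \<and> i \<le> n}"
  then obtain i0 where i0: "1 \<le> i0" "i0 \<le> n" and vd: "v = (\<lambda>k. 1 * real (m i0) * unitv i0 k)" by auto
  have "(\<Sum>i=1..n. \<bar>v i\<bar> / real (m i)) = \<bar>1\<bar>" unfolding vd
    by (rule delta_sum) (use i0 m in auto)
  then show ?thesis by (auto simp: vd unitv_def)
next
  assume "v \<in> {(\<lambda>k. - real (m i) * unitv i k) | i. 1 \<le> i \<and> i \<le> j}"
  then obtain i0 where i0: "1 \<le> i0" "i0 \<le> j" and vd: "v = (\<lambda>k. (-1) * real (m i0) * unitv i0 k)" by auto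
  show ?thesis
  proof (cases "i0 \<le> n")
    case True
    have "(\<Sum>i=1..n. \<bar>v i\<bar> / real (m i)) = \<bar>-1\<bar>" unfolding vd
      by (rule delta_sum) (use i0 m True in auto)
    then show ?thesis using i0 by (auto simp: vd unitv_def)
  next
    case False
    then show ?thesis using i0 by (auto simp: vd unitv_def)
  qed
qed

lemma hull_sub:
  assumes m: "\<forall>i. 1 \<le> i \<and> i \<le> n \<longrightarrow> m i \<ge> 1" and y: "y \<in> newtonG n m j"
  shows "(\<forall>i. j < i \<and> i \<le> n \<longrightarrow> y i \<ge> 0) \<and> (\<Sum>i=1..n. \<bar>y i\<bar> / real (m i)) \<le> 1"
proof -
  obtain F a where F: "F \<subseteq> VV n m j" "finite F" and a: "\<forall>v\<in>F. a v \<ge> 0" "sum a F = 1"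
    and yd: "y = (\<lambda>k. \<Sum>v\<in>F. a v * v k)"
    using y unfolding newtonG_def conv_hull_def VV_def by blast
  have vt: "\<And>v. v \<in> F \<Longrightarrow> (\<forall>i. j < i \<and> i \<le> n \<longrightarrow> v i \<ge> 0) \<and> (\<Sum>i=1..n. \<bar>v i\<bar> / real (m i)) \<le> 1"
    using vert[OF m] F by blast
  have s1: "\<forall>i. j < i \<and> i \<le> n \<longrightarrow> y i \<ge> 0"
    unfolding yd using vt a by (auto intro!: sum_nonneg)
  have "(\<Sum>i=1..n. \<bar>y i\<bar> / real (m i)) \<le> (\<Sum>i=1..n. (\<Sum>v\<in>F. a v * \<bar>v i\<bar>) / real (m i))"
  proof (rule sum_mono)
    fix i assume "i \<in> {1..n}"
    have "\<bar>y i\<bar> \<le> (\<Sum>v\<in>F. \<bar>a v * v i\<bar>)" unfolding yd by (rule sum_abs)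
    also have "\<dots> = (\<Sum>v\<in>F. a v * \<bar>v i\<bar>)" using a by (intro sum.cong) (auto simp: abs_mult)
    finally show "\<bar>y i\<bar> / real (m i) \<le> (\<Sum>v\<in>F. a v * \<bar>v i\<bar>) / real (m i)"
      by (simp add: divide_right_mono)
  qed
  also have "\<dots> = (\<Sum>i=1..n. \<Sum>v\<in>F. a v * (\<bar>v i\<bar> / real (m i)))"
    by (simp add: sum_divide_distrib)
  also have "\<dots> = (\<Sum>v\<in>F. \<Sum>i=1..n. a v * (\<bar>v i\<bar> / real (m i)))"
    by (rule sum.swap)
  also have "\<dots> = (\<Sum>v\<in>F. a v * (\<Sum>i=1..n. \<bar>v i\<bar> / real (m i)))"
    by (simp add: sum_distrib_left)
  also have "\<dots> \<le> (\<Sum>v\<in>F. a v * 1)"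
    using vt a by (intro sum_mono mult_left_mono) auto
  also have "\<dots> = 1" using a by simp
  finally show ?thesis using s1 by simp
qed

lemma hull_sup:
  assumes m: "\<forall>i. 1 \<le> i \<and> i \<le> n \<longrightarrow> m i \<ge> 1"
    and sg: "\<forall>i. j < i \<and> i \<le> n \<longrightarrow> y i \<ge> 0"
    and s: "(\<Sum>i=1..n. \<bar>y i\<bar> / real (m i)) \<le> 1"
    and supp: "\<forall>k. (k < 1 \<or> k > n) \<longrightarrow> y k = 0"
  shows "y \<in> newtonG n m j"
proof -
  define I where "I = {1..n::nat}"
  define S where "S = (\<Sum>i=1..n. \<bar>y i\<bar> / real (m i))"
  define p where "p i = (if y i < 0 then (\<lambda>k. - real (m i) * unitv i k) else (\<lambda>k. real (m i) * unitv i k))" for i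
  define z where "z = (\<lambda>k::nat. 0::real)"
  define F where "F = insert z (p ` I)"
  define a where "a v = (if v = z then 1 - S else (\<Sum>i\<in>I. if v = p i then \<bar>y i\<bar> / real (m i) else 0))" for v
  have pk: "p i k = (if k = i then (if y i < 0 then - real (m i) else real (m i)) else 0)" for i k
    by (auto simp: p_def unitv_def)
  have pii: "p i i \<noteq> 0" if "i \<in> I" for i using m that by (auto simp: pk I_def)
  have pz: "p i \<noteq> z" if "i \<in> I" for i using pii[OF that] by (auto simp: z_def)
  have inj: "inj_on p I"
  proof (rule inj_onI)
    fix i i' assume "i \<in> I" "i' \<in> I" "p i = p i'"
    then show "i = i'" using pii[of i] by (metis pk)
  qed
  have ap: "a (p i) = \<bar>y i\<bar> / real (m i)" if "i \<in> I" for i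
  proof -
    have "a (p i) = (\<Sum>i'\<in>I. if i' = i then \<bar>y i'\<bar> / real (m i') else 0)"
      unfolding a_def using pz[OF that] inj that
      by (auto intro!: sum.cong dest: inj_onD)
    also have "\<dots> = \<bar>y i\<bar> / real (m i)" using that by (simp add: I_def)
    finally show ?thesis .
  qed
  have zI: "z \<notin> p ` I" using pz by auto
  have FV: "F \<subseteq> VV n m j"
  proof -
    have "p i \<in> VV n m j" if "i \<in> I" for i
    proof (cases "y i < 0")
      case True
      then have "i \<le> j" using sg that unfolding I_def by (meson atLeastAtMost_iff leI linorder_not_le)
      then show ?thesis using that True unfolding VV_def p_def I_def by auto
    next
      case False
      then show ?thesis using that unfolding VV_def p_def I_def by auto
    qed
    then show ?thesis unfolding F_def VV_def z_def by auto
  qed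
  have fin: "finite F" unfolding F_def I_def by simp
  have anon: "\<forall>v\<in>F. a v \<ge> 0" unfolding F_def using s ap by (auto simp: a_def S_def)
  have sumF: "sum a F = 1"
  proof -
    have "sum a F = a z + sum a (p ` I)" unfolding F_def using zI by (simp add: I_def)
    also have "sum a (p ` I) = sum (a \<circ> p) I" by (rule sum.reindex[OF inj])
    also have "\<dots> = S" unfolding S_def I_def using ap by (auto simp: I_def intro!: sum.cong)
    finally show ?thesis by (simp add: a_def)
  qed
  have yF: "y = (\<lambda>k. \<Sum>v\<in>F. a v * v k)"
  proof
    fix k
    have "(\<Sum>v\<in>F. a v * v k) = a z * z k + (\<Sum>v\<in>p ` I. a v * v k)"
      unfolding F_def using zI by (simp add: I_def)
    also have "(\<Sum>v\<in>p ` I. a v * v k) = (\<Sum>i\<in>I. a (p i) * p i k)"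
      by (simp add: sum.reindex[OF inj])
    also have "\<dots> = (\<Sum>i\<in>I. if i = k then \<bar>y k\<bar> / real (m k) * p k k else 0)"
      using ap by (auto intro!: sum.cong simp: pk)
    also have "\<dots> = y k"
    proof (cases "k \<in> I")
      case True
      then have "m k \<ge> 1" using m by (auto simp: I_def)
      have "(\<Sum>i\<in>I. if i = k then \<bar>y k\<bar> / real (m k) * p k k else 0) = \<bar>y k\<bar> / real (m k) * p k k"
        using True by (simp add: I_def)
      also have "\<dots> = y k" using \<open>m k \<ge> 1\<close> by (auto simp: pk)
      finally show ?thesis .
    next
      case False
      then have "y k = 0" using supp by (auto simp: I_def not_le)
      then show ?thesis by (simp add: I_def)
    qed
    finally show "y k = (\<Sum>v\<in>F. a v * v k)" by (simp add: z_def)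
  qed
  show ?thesis unfolding newtonG_def conv_hull_def
    using FV fin anon sumF yF unfolding VV_def F_def by blast
qed

lemma mem_scale:
  assumes m: "\<forall>i. 1 \<le> i \<and> i \<le> n \<longrightarrow> m i \<ge> 1" and c: "c \<ge> 0"
    and supp: "\<forall>k. (k < 1 \<or> k > n) \<longrightarrow> x k = 0"
  shows "x \<in> scaleset c (newtonG n m j) \<longleftrightarrow>
    (\<forall>i. j < i \<and> i \<le> n \<longrightarrow> x i \<ge> 0) \<and> (\<Sum>i=1..n. \<bar>x i\<bar> / real (m i)) \<le> c"
proof
  assume "x \<in> scaleset c (newtonG n m j)"
  then obtain y where y: "y \<in> newtonG n m j" and xd: "x = (\<lambda>k. c * y k)"
    unfolding scaleset_def by auto
  note h = hull_sub[OF m y]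
  have "(\<Sum>i=1..n. \<bar>x i\<bar> / real (m i)) = c * (\<Sum>i=1..n. \<bar>y i\<bar> / real (m i))"
    unfolding xd using c by (simp add: sum_distrib_left abs_mult)
  also have "\<dots> \<le> c * 1" using h c by (intro mult_left_mono) auto
  finally show "(\<forall>i. j < i \<and> i \<le> n \<longrightarrow> x i \<ge> 0) \<and> (\<Sum>i=1..n. \<bar>x i\<bar> / real (m i)) \<le> c"
    using h c unfolding xd by auto
next
  assume h: "(\<forall>i. j < i \<and> i \<le> n \<longrightarrow> x i \<ge> 0) \<and> (\<Sum>i=1..n. \<bar>x i\<bar> / real (m i)) \<le> c"
  show "x \<in> scaleset c (newtonG n m j)"
  proof (cases "c = 0")
    case True
    have z: "(\<lambda>k. 0::real) \<in> newtonG n m j"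
      by (rule hull_sup[OF m]) auto
    have A: "\<forall>i\<in>{1..n}. \<bar>x i\<bar> / real (m i) = 0"
      proof (subst sum_nonneg_eq_0_iff[symmetric])
      show "(\<Sum>i=1..n. \<bar>x i\<bar> / real (m i)) = 0"
        using h True by (intro order.antisym sum_nonneg) auto
    qed auto
    have xi: "x i = 0" if i: "i \<in> {1..n}" for i
    proof -
      have "\<bar>x i\<bar> / real (m i) = 0" using A i by blast
      moreover have "m i \<ge> 1" using m i by simp
      ultimately show "x i = 0" by simp
    qed
    have "x = (\<lambda>k. c * 0)"
    proof
      fix k show "x k = c * 0"
      proof (cases "k \<in> {1..n}")
        case True then show ?thesis using xi by simp
      next
        case False then have "k < 1 \<or> k > n" by auto
        then show ?thesis using supp by auto
      qed
    qed
    then show ?thesis unfolding scaleset_def by (intro image_eqI[OF _ z]) simp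
  next
    case False
    then have cp: "c > 0" using c by simp
    define y where "y = (\<lambda>k. x k / c)"
    have "(\<Sum>i=1..n. \<bar>y i\<bar> / real (m i)) = (\<Sum>i=1..n. \<bar>x i\<bar> / real (m i)) / c"
      unfolding y_def using cp by (simp add: sum_divide_distrib mult.commute)
    also have "\<dots> \<le> 1" using h cp by simp
    finally have "y \<in> newtonG n m j"
      by (intro hull_sup[OF m]) (use h cp supp in \<open>auto simp: y_def\<close>)
    moreover have "x = (\<lambda>k. c * y k)" using cp by (auto simp: y_def)
    ultimately show ?thesis unfolding scaleset_def by auto
  qed
qed

definition wq :: "nat \<Rightarrow> (nat \<Rightarrow> nat) \<Rightarrow> (nat \<Rightarrow> int) \<Rightarrow> rat" where
  "wq n m u = (\<Sum>i=1..n. of_int \<bar>u i\<bar> / of_nat (m i))"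

lemma wq_real: "real_of_rat (wq n m u) = (\<Sum>i=1..n. \<bar>real_of_int (u i)\<bar> / real (m i))"
  unfolding wq_def by (simp add: of_rat_sum of_rat_divide flip: abs_of_rat)

lemma wq_nonneg: "wq n m u \<ge> 0" unfolding wq_def by (auto intro!: sum_nonneg)

lemma hw_iff:
  assumes m: "\<forall>i. 1 \<le> i \<and> i \<le> n \<longrightarrow> m i \<ge> 1" and u: "u \<in> lattice n"
  shows "has_weight (newtonG n m j) (\<lambda>k. real_of_int (u k)) w \<longleftrightarrow>
     (\<forall>i. j < i \<and> i \<le> n \<longrightarrow> u i \<ge> 0) \<and> wq n m u = w"
proof -
  have supp: "\<forall>k. (k < 1 \<or> k > n) \<longrightarrow> real_of_int (u k) = 0" using u by (auto simp: lattice_def)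
  have ms: "(\<lambda>k. real_of_int (u k)) \<in> scaleset (of_rat c) (newtonG n m j) \<longleftrightarrow>
     (\<forall>i. j < i \<and> i \<le> n \<longrightarrow> u i \<ge> 0) \<and> wq n m u \<le> c" if "c \<ge> 0" for c
  proof -
    have "wq n m u \<le> c \<longleftrightarrow> (\<Sum>i=1..n. \<bar>real_of_int (u i)\<bar> / real (m i)) \<le> of_rat c"
      using of_rat_less_eq[of "wq n m u" c, where 'a=real] unfolding wq_real by simp
    then show ?thesis using mem_scale[OF m _ supp, of "of_rat c" j] that
      by (simp add: zero_le_of_rat_iff)
  qed
  show ?thesis
  proof
    assume hw: "has_weight (newtonG n m j) (\<lambda>k. real_of_int (u k)) w"
    then have w0: "w \<ge> 0" and a: "(\<forall>i. j < i \<and> i \<le> n \<longrightarrow> u i \<ge> 0) \<and> wq n m u \<le> w"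
      using ms unfolding has_weight_def by auto
    moreover have "w \<le> wq n m u" using hw a ms[OF wq_nonneg] wq_nonneg unfolding has_weight_def by blast
    ultimately show "(\<forall>i. j < i \<and> i \<le> n \<longrightarrow> u i \<ge> 0) \<and> wq n m u = w" by auto
  next
    assume "(\<forall>i. j < i \<and> i \<le> n \<longrightarrow> u i \<ge> 0) \<and> wq n m u = w"
    then show "has_weight (newtonG n m j) (\<lambda>k. real_of_int (u k)) w"
      unfolding has_weight_def using ms wq_nonneg by auto
  qed
qed

definition SS where
  "SS n m j w = {u \<in> lattice n. (\<forall>i. j < i \<and> i \<le> n \<longrightarrow> u i \<ge> 0) \<and> wq n m u = w}"

lemma Ncount_SS:
  assumes m: "\<forall>i. 1 \<le> i \<and> i \<le> n \<longrightarrow> m i \<ge> 1"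
  shows "Ncount n (newtonG n m j) w = card (SS n m j w)"
  unfolding Ncount_def SS_def by (rule arg_cong[where f=card]) (use hw_iff[OF m] in blast)

lemma finite_SS:
  assumes m: "\<forall>i. 1 \<le> i \<and> i \<le> n \<longrightarrow> m i \<ge> 1"
  shows "finite (SS n m j w)"
proof -
  define M where "M = (\<Sum>i=1..n. m i)"
  define B where "B = \<lceil>w * of_nat M\<rceil>"
  define g where "g f = (\<lambda>k. if k \<in> {1..n} then f k else (0::int))" for f :: "nat \<Rightarrow> int"
  have "SS n m j w \<subseteq> g ` (PiE {1..n} (\<lambda>_. {-B..B}))"
  proof
    fix u assume u: "u \<in> SS n m j w"
    have bd: "\<bar>u i\<bar> \<le> B" if i: "i \<in> {1..n}" for i
    proof -
      have mi: "m i \<ge> 1" using m i by auto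
      have "of_int \<bar>u i\<bar> / of_nat (m i) \<le> wq n m u"
        unfolding wq_def by (rule member_le_sum) (use i in auto)
      then have "of_int \<bar>u i\<bar> / of_nat (m i) \<le> w" using u by (simp add: SS_def)
      then have "(of_int \<bar>u i\<bar> :: rat) \<le> w * of_nat (m i)" using mi by (simp add: divide_le_eq)
      also have "\<dots> \<le> w * of_nat M"
      proof (rule mult_left_mono)
        show "(of_nat (m i) :: rat) \<le> of_nat M" unfolding M_def
          by (subst of_nat_le_iff) (rule member_le_sum, use i in auto)
        show "0 \<le> w" using u wq_nonneg[of n m u] by (simp add: SS_def)
      qed
      finally have "(of_int \<bar>u i\<bar> :: rat) \<le> w * of_nat M" .
      then show ?thesis unfolding B_def by (meson le_of_int_ceiling order_trans of_int_le_iff)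
    qed
    have ul: "\<forall>k. (k < 1 \<or> k > n) \<longrightarrow> u k = 0" using u by (simp add: SS_def lattice_def)
    have "u = g (restrict u {1..n})"
    proof
      fix k show "u k = g (restrict u {1..n}) k"
        using ul[rule_format, of k] by (auto simp: g_def restrict_def)
    qed
    moreover have "restrict u {1..n} \<in> PiE {1..n} (\<lambda>_. {-B..B})"
      using bd by (force simp: abs_le_iff)
    ultimately show "u \<in> g ` (PiE {1..n} (\<lambda>_. {-B..B}))" by blast
  qed
  moreover have "finite (g ` (PiE {1..n} (\<lambda>_. {-B..B})))"
    by (intro finite_imageI finite_PiE) auto
  ultimately show ?thesis by (rule finite_subset)
qed

lemma sum_del:
  fixes f :: "nat \<Rightarrow> 'a::comm_monoid_add"
  assumes "1 \<le> j" "j \<le> n"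
  shows "(\<Sum>i=1..n. f i) = (\<Sum>i=1..n-1. if i < j then f i else f (i+1)) + f j"
  using assms(2)
proof (induction n rule: dec_induct)
  case base
  have "(\<Sum>i=1..j. f i) = (\<Sum>i=1..j-1. f i) + f j"
    using assms(1) by (metis Suc_diff_1 le_eq_less_or_eq less_one not_less sum.cl_ivl_Suc le_SucI
       Suc_eq_plus1 not_less_eq_eq)
  moreover have "(\<Sum>i=1..j-1. if i < j then f i else f (i+1)) = (\<Sum>i=1..j-1. f i)"
    by (intro sum.cong) auto
  ultimately show ?case by simp
next
  case (step k)
  have k1: "k \<ge> 1" using step assms by simp
  have "(\<Sum>i=1..Suc k. f i) = (\<Sum>i=1..k. f i) + f (Suc k)" by simp
  also have "\<dots> = (\<Sum>i=1..k-1. if i < j then f i else f (i+1)) + f j + f (Suc k)" using step by simp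
  also have "(\<Sum>i=1..k. if i < j then f i else f (i+1)) = (\<Sum>i=1..k-1. if i < j then f i else f (i+1)) + f (Suc k)"
  proof -
    have "{1..k} = insert k {1..k-1}" using k1 by auto
    then show ?thesis using step(1) k1 by (simp add: add.commute)
  qed
  ultimately show ?case by (simp add: ac_simps)
qed

definition del :: "nat \<Rightarrow> (nat \<Rightarrow> int) \<Rightarrow> nat \<Rightarrow> int" where
  "del j u = (\<lambda>k. if k < j then u k else u (k+1))"
definition ins :: "nat \<Rightarrow> (nat \<Rightarrow> int) \<Rightarrow> nat \<Rightarrow> int" where
  "ins j v = (\<lambda>k. if k < j then v k else if k = j then 0 else v (k-1))"

lemma del_ins: "del j (ins j v) = v"
  by (auto simp: del_def ins_def)

lemma wq_del:
  assumes "1 \<le> j" "j \<le> n" "u j = 0"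
  shows "wq (n-1) (\<lambda>i. if i < j then m i else m (i + 1)) (del j u) = wq n m u"
proof -
  have "wq n m u = (\<Sum>i=1..n-1. if i < j then of_int \<bar>u i\<bar> / of_nat (m i)
          else of_int \<bar>u (i+1)\<bar> / of_nat (m (i+1))) + of_int \<bar>u j\<bar> / of_nat (m j)"
    unfolding wq_def by (rule sum_del[OF assms(1,2)])
  also have "\<dots> = wq (n-1) (\<lambda>i. if i < j then m i else m (i + 1)) (del j u)"
    unfolding wq_def del_def using assms(3) by (auto intro!: sum.cong)
  finally show ?thesis by simp
qed

theorem mainTheorem4:
  fixes n j :: nat and m :: "nat \<Rightarrow> nat" and w :: rat
  assumes "n \<ge> 1" and "\<forall>i. 1 \<le> i \<and> i \<le> n \<longrightarrow> m i \<ge> 1"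
    and "1 \<le> j" and "j \<le> n" and "w \<ge> 0"
  shows "int (Ncount n (newtonG n m j) w)
       = 2 * int (Ncount n (newtonG n m (j - 1)) w)
         - int (Ncount (n - 1) (newtonG (n - 1) (\<lambda>i. if i < j then m i else m (i + 1)) (j - 1)) w)"
proof -
  note m = assms(2)
  define m' where "m' = (\<lambda>i. if i < j then m i else m (i + 1))"
  have m': "\<forall>i. 1 \<le> i \<and> i \<le> n - 1 \<longrightarrow> m' i \<ge> 1" using m assms(4) by (auto simp: m'_def)
  define P where "P = SS n m j w"
  define P0 where "P0 = {u\<in>P. u j = 0}"
  define Pp where "Pp = {u\<in>P. u j > 0}"
  define Pn where "Pn = {u\<in>P. u j < 0}"
  have finP: "finite P" unfolding P_def by (rule finite_SS[OF m])
  have cP: "card P = card P0 + card Pp + card Pn"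
  proof -
    have "P = (P0 \<union> Pp) \<union> Pn" unfolding P0_def Pp_def Pn_def by auto
    moreover have "card (P0 \<union> Pp) = card P0 + card Pp"
      by (rule card_Un_disjoint) (use finP in \<open>auto simp: P0_def Pp_def\<close>)
    moreover have "card ((P0 \<union> Pp) \<union> Pn) = card (P0 \<union> Pp) + card Pn"
      by (rule card_Un_disjoint) (use finP in \<open>auto simp: P0_def Pp_def Pn_def\<close>)
    ultimately show ?thesis by simp
  qed
  have Q: "SS n m (j-1) w = P0 \<union> Pp"
  proof -
    have iff: "(\<forall>i. j-1 < i \<and> i \<le> n \<longrightarrow> 0 \<le> u i) \<longleftrightarrow>
        (\<forall>i. j < i \<and> i \<le> n \<longrightarrow> 0 \<le> u i) \<and> 0 \<le> u j" for u :: "nat \<Rightarrow> int"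
    proof
      assume H: "\<forall>i. j-1 < i \<and> i \<le> n \<longrightarrow> 0 \<le> u i"
      show "(\<forall>i. j < i \<and> i \<le> n \<longrightarrow> 0 \<le> u i) \<and> 0 \<le> u j"
      proof (intro conjI allI impI)
        fix i assume a: "j < i \<and> i \<le> n"
        then have "j - 1 < i" by linarith
        then show "0 \<le> u i" using H a by blast
      next
        have "j - 1 < j" using assms(3) by linarith
        then show "0 \<le> u j" using H assms(4) by blast
      qed
    next
      assume H: "(\<forall>i. j < i \<and> i \<le> n \<longrightarrow> 0 \<le> u i) \<and> 0 \<le> u j"
      show "\<forall>i. j-1 < i \<and> i \<le> n \<longrightarrow> 0 \<le> u i"
      proof (intro allI impI)
        fix i assume i: "j-1 < i \<and> i \<le> n"
        show "0 \<le> u i"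
        proof (cases "i = j")
          case True then show ?thesis using H by simp
        next
          case False then have "j < i" using i by linarith
          then show ?thesis using H i by blast
        qed
      qed
    qed
    have "SS n m (j-1) w = {u\<in>P. u j \<ge> 0}"
      unfolding P_def SS_def iff by blast
    moreover have "{u\<in>P. u j \<ge> 0} = P0 \<union> Pp"
    proof (rule set_eqI)
      fix u show "u \<in> {u\<in>P. u j \<ge> 0} \<longleftrightarrow> u \<in> P0 \<union> Pp"
        unfolding P0_def Pp_def by (cases "u j = 0") auto
    qed
    ultimately show ?thesis by simp
  qed
  have cQ: "card (SS n m (j-1) w) = card P0 + card Pp"
    unfolding Q by (rule card_Un_disjoint) (use finP in \<open>auto simp: P0_def Pp_def\<close>)
  define fl where "fl u = u(j := - u j)" for u :: "nat \<Rightarrow> int"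
  have wfl: "wq n m (u(j := - u j)) = wq n m u" for u
    unfolding wq_def by (intro sum.cong) auto
  have "bij_betw fl Pp Pn"
  proof (rule bij_betw_byWitness[where f'=fl])
    show "\<forall>a\<in>Pp. fl (fl a) = a" "\<forall>a\<in>Pn. fl (fl a) = a" by (auto simp: fl_def)
    show "fl ` Pp \<subseteq> Pn" "fl ` Pn \<subseteq> Pp"
      using assms(3,4) by (auto simp: Pp_def Pn_def P_def SS_def wfl lattice_def fl_def)
  qed
  then have cPn: "card Pn = card Pp" by (simp add: bij_betw_same_card)
  have "bij_betw (del j) P0 (SS (n-1) m' (j-1) w)"
  proof (rule bij_betw_byWitness[where f'="ins j"])
    show "\<forall>a\<in>P0. ins j (del j a) = a"
    proof
      fix a assume "a \<in> P0"
      then have aj: "a j = 0" by (simp add: P0_def)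
      show "ins j (del j a) = a"
      proof
        fix k show "ins j (del j a) k = a k"
          using aj by (cases "k < j"; cases "k = j") (auto simp: ins_def del_def)
      qed
    qed
    show "\<forall>a\<in>SS (n-1) m' (j-1) w. del j (ins j a) = a" by (simp add: del_ins)
    show "del j ` P0 \<subseteq> SS (n-1) m' (j-1) w"
    proof
      fix v assume "v \<in> del j ` P0"
      then obtain u where u: "u \<in> P0" and v: "v = del j u" by auto
      have ul: "u \<in> lattice n" and us: "\<forall>i. j < i \<and> i \<le> n \<longrightarrow> u i \<ge> 0" and uw: "wq n m u = w"
        and uj: "u j = 0" using u by (auto simp: P0_def P_def SS_def)
      have "v \<in> lattice (n-1)" unfolding lattice_def
      proof (intro CollectI allI impI)
        fix k assume "k < 1 \<or> n - 1 < k"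
        then show "v k = 0" using ul assms(3,4) unfolding v del_def lattice_def by auto
      qed
      moreover have "\<forall>i. j - 1 < i \<and> i \<le> n - 1 \<longrightarrow> v i \<ge> 0"
        using us assms(3,4) unfolding v del_def by auto
      moreover have "wq (n-1) m' v = w" using wq_del[of j n u m, OF assms(3,4) uj] uw
        unfolding v m'_def by simp
      ultimately show "v \<in> SS (n-1) m' (j-1) w" by (simp add: SS_def)
    qed
    show "ins j ` SS (n-1) m' (j-1) w \<subseteq> P0"
    proof
      fix u assume "u \<in> ins j ` SS (n-1) m' (j-1) w"
      then obtain v where v: "v \<in> SS (n-1) m' (j-1) w" and u: "u = ins j v" by auto
      have vl: "v \<in> lattice (n-1)" and vs: "\<forall>i. j - 1 < i \<and> i \<le> n - 1 \<longrightarrow> v i \<ge> 0"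
        and vw: "wq (n-1) m' v = w" using v by (auto simp: SS_def)
      have uj: "u j = 0" by (simp add: u ins_def)
      have "u \<in> lattice n" unfolding lattice_def
      proof (intro CollectI allI impI)
        fix k assume "k < 1 \<or> n < k"
        then show "u k = 0" using vl assms(3,4) unfolding u ins_def lattice_def by auto
      qed
      moreover have "\<forall>i. j < i \<and> i \<le> n \<longrightarrow> u i \<ge> 0"
      proof (intro allI impI)
        fix i assume a: "j < i \<and> i \<le> n"
        then have "j - 1 < i - 1 \<and> i - 1 \<le> n - 1" using assms(3) by linarith
        then have "v (i - 1) \<ge> 0" using vs by blast
        then show "u i \<ge> 0" using a unfolding u ins_def by simp
      qed
      moreover have "wq n m u = w"
        using wq_del[of j n u m, OF assms(3,4) uj] vw unfolding u del_ins m'_def by simp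
      ultimately show "u \<in> P0" using uj by (simp add: P0_def P_def SS_def)
    qed
  qed
  then have cR: "card (SS (n-1) m' (j-1) w) = card P0" by (simp add: bij_betw_same_card)
  have cN: "Ncount (n-1) (newtonG (n-1) m' (j-1)) w = card (SS (n-1) m' (j-1) w)"
    by (rule Ncount_SS[OF m'])
  show ?thesis
    using cP cQ cR cPn cN
    unfolding Ncount_SS[OF m] P_def[symmetric] m'_def[symmetric]
    by simp
qed

end
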